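(* Let $(\Omega,\mathcal{F},P_0)$ be a complete probability space, $\epsilon\in(0,1)$, $\mathcal{C}\subseteq\mathcal{F}$ a sub-$\sigma$-algebra, and $\rho$ a sublinear operator on $L^{2+\epsilon}_{\mathcal{F}}(\Omega,P_0)$ with representation set $\mathcal{P}$, satisfying the standing assumptions below. Let $\xi\in L^{4+2\epsilon}_{\mathcal{F}}(\Omega,P_0)$. If $\rho$ is stable, then the minimizer of $\eta\mapsto\rho((\xi-\eta)^2)$ over $\eta\in L^{2+\epsilon}_{\mathcal{C}}(P_0)$ is unique: if $\hat\eta_1,\hat\eta_2\in L^{2+\epsilon}_{\mathcal{C}}(P_0)$ both attain $\inf_{\eta\in L^{2+\epsilon}_{\mathcal{C}}(P_0)}\rho((\xi-\eta)^2)$, then $\hat\eta_1=\hat\eta_2$ $P_0$-a.s.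
   Context: A sublinear operator is a map $\rho:L^{2+\epsilon}_{\mathcal{F}}(\Omega,P_0)\to\mathbb{R}$ that is monotone, constant preserving, sub-additive and positively homogeneous. Its representation set $\mathcal{P}$ is the family of all linear expectations (identified with probability measures $P$) dominated by $\rho$, so $\rho(\xi)=\max_{P\in\mathcal{P}}E_P[\xi]$; $\rho((\xi-\eta)^2)$ means $\sup_{P\in\mathcal{P}}E_P[(\xi-\eta)^2]$. Write $f^P=dP/dP_0$, $\mathcal{D}=\{f^P:P\in\mathcal{P}\}$. Standing assumptions: every $P\in\mathcal{P}$ is equivalent to $P_0$; $\mathcal{D}$ is norm-bounded in $L^{1+\frac{2}{\epsilon}}_{\mathcal{F}}(P_0)$ and $\sigma(L^{1+\frac{2}{\epsilon}}(P_0),L^{1+\frac{\epsilon}{2}}(P_0))$-compact. $\rho$ is stable if for each $P\in\mathcal{P}$ the random variable $f^P/E_{P_0}[f^P\mid\mathcal{C}]$ lies in $\mathcal{D}$. $L^{2+\epsilon}_{\mathcal{C}}(P_0)$ denotes the $\mathcal{C}$-measurable elements of $L^{2+\epsilon}(P_0)$. *)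

theory Defs
  imports "HOL-Probability.Probability"
begin

definition Lp :: "'a measure \<Rightarrow> real \<Rightarrow> ('a \<Rightarrow> real) set" where
  "Lp M p = {X. X \<in> borel_measurable M \<and> integrable M (\<lambda>x. \<bar>X x\<bar> powr p)}"

definition LpC :: "'a measure \<Rightarrow> 'a measure \<Rightarrow> real \<Rightarrow> ('a \<Rightarrow> real) set" where
  "LpC M C p = {X. X \<in> borel_measurable C \<and> integrable M (\<lambda>x. \<bar>X x\<bar> powr p)}"

definition sublinear_operator :: "'a measure \<Rightarrow> real \<Rightarrow> (('a \<Rightarrow> real) \<Rightarrow> real) \<Rightarrow> bool" where
  "sublinear_operator M p \<rho> \<longleftrightarrow>
     (\<forall>X\<in>Lp M p. \<forall>Y\<in>Lp M p. (AE x in M. X x \<le> Y x) \<longrightarrow> \<rho> X \<le> \<rho> Y) \<and>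
     (\<forall>c::real. \<rho> (\<lambda>_. c) = c) \<and>
     (\<forall>X\<in>Lp M p. \<forall>Y\<in>Lp M p. \<rho> (\<lambda>x. X x + Y x) \<le> \<rho> X + \<rho> Y) \<and>
     (\<forall>X\<in>Lp M p. \<forall>a::real. a \<ge> 0 \<longrightarrow> \<rho> (\<lambda>x. a * X x) = a * \<rho> X)"

text \<open>The set D of densities f^P = dP/dP0 of the probability measures P (absolutely
  continuous w.r.t. P0, as linear expectations on L^p(P0)) dominated by \<rho>:
  E_P[X] = E_P0[f X] \<le> \<rho> X for all X in L^p.\<close>
definition rep_densities :: "'a measure \<Rightarrow> real \<Rightarrow> (('a \<Rightarrow> real) \<Rightarrow> real) \<Rightarrow> ('a \<Rightarrow> real) set" where
  "rep_densities M p \<rho> = {f. f \<in> borel_measurable M \<and> (AE x in M. 0 \<le> f x) \<and>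
      integrable M f \<and> (\<integral>x. f x \<partial>M) = 1 \<and>
      (\<forall>X\<in>Lp M p. integrable M (\<lambda>x. f x * X x) \<and> (\<integral>x. f x * X x \<partial>M) \<le> \<rho> X)}"

text \<open>The weak topology sigma(L^q, L^r) on (representatives of) random variables:
  initial topology of the maps f \<mapsto> E[f g], g \<in> L^r.\<close>
definition weak_topology :: "'a measure \<Rightarrow> real \<Rightarrow> ('a \<Rightarrow> real) topology" where
  "weak_topology M r = topology_generated_by
     {{f. (\<integral>x. f x * g x \<partial>M) \<in> U} | g U. g \<in> Lp M r \<and> open U}"

text \<open>rho((xi - eta)^2) := sup over P in the representation set of E_P[(xi-eta)^2].\<close>
definition rho_sq :: "'a measure \<Rightarrow> real \<Rightarrow> (('a \<Rightarrow> real) \<Rightarrow> real) \<Rightarrow> ('a \<Rightarrow> real) \<Rightarrow> ('a \<Rightarrow> real) \<Rightarrow> real" where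
  "rho_sq M p \<rho> \<xi> \<eta> = (SUP f\<in>rep_densities M p \<rho>. \<integral>x. f x * (\<xi> x - \<eta> x)\<^sup>2 \<partial>M)"

definition stable :: "'a measure \<Rightarrow> 'a measure \<Rightarrow> real \<Rightarrow> (('a \<Rightarrow> real) \<Rightarrow> real) \<Rightarrow> bool" where
  "stable M C p \<rho> \<longleftrightarrow> (\<forall>f\<in>rep_densities M p \<rho>. (\<lambda>x. f x / real_cond_exp M C f x) \<in> rep_densities M p \<rho>)"

end

theory Submission
  imports Defs
begin

lemma powr_max_bound:
  fixes a b c k p :: real
  assumes "0 \<le> k" "0 < p" "\<bar>c\<bar> \<le> k * max \<bar>a\<bar> \<bar>b\<bar>"
  shows "\<bar>c\<bar> powr p \<le> k powr p * (\<bar>a\<bar> powr p + \<bar>b\<bar> powr p)"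
proof -
  have "\<bar>c\<bar> powr p \<le> (k * max \<bar>a\<bar> \<bar>b\<bar>) powr p"
    using assms by (intro powr_mono2) auto
  also have "\<dots> = k powr p * max \<bar>a\<bar> \<bar>b\<bar> powr p"
    using assms by (simp add: powr_mult)
  also have "max \<bar>a\<bar> \<bar>b\<bar> powr p \<le> \<bar>a\<bar> powr p + \<bar>b\<bar> powr p"
    by (cases "\<bar>a\<bar> \<le> \<bar>b\<bar>") (auto simp: max_def)
  hence "k powr p * max \<bar>a\<bar> \<bar>b\<bar> powr p \<le> k powr p * (\<bar>a\<bar> powr p + \<bar>b\<bar> powr p)"
    by (intro mult_left_mono) auto
  finally show ?thesis .
qed

lemma integrable_comb:
  fixes X Y Z :: "'a \<Rightarrow> real"
  assumes "integrable M (\<lambda>x. \<bar>X x\<bar> powr p)" "integrable M (\<lambda>x. \<bar>Y x\<bar> powr p)"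
    "Z \<in> borel_measurable M" "0 \<le> k" "0 < p"
    "\<And>x. \<bar>Z x\<bar> \<le> k * max \<bar>X x\<bar> \<bar>Y x\<bar>"
  shows "integrable M (\<lambda>x. \<bar>Z x\<bar> powr p)"
proof (rule Bochner_Integration.integrable_bound[of _ "\<lambda>x. k powr p * (\<bar>X x\<bar> powr p + \<bar>Y x\<bar> powr p)"])
  show "integrable M (\<lambda>x. k powr p * (\<bar>X x\<bar> powr p + \<bar>Y x\<bar> powr p))"
    using assms by auto
  show "(\<lambda>x. \<bar>Z x\<bar> powr p) \<in> borel_measurable M" using assms by measurable
  show "AE x in M. norm (\<bar>Z x\<bar> powr p) \<le> norm (k powr p * (\<bar>X x\<bar> powr p + \<bar>Y x\<bar> powr p))"
    using powr_max_bound[OF assms(4,5) assms(6)] by auto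
qed

lemma powr_sq_eq: "\<bar>(x::real)\<^sup>2\<bar> powr (1 + e / 2) = \<bar>x\<bar> powr (2 + e)"
proof (cases "x = 0")
  case False
  have "\<bar>x\<^sup>2\<bar> = \<bar>x\<bar> powr 2" using False by (simp add: powr_realpow power2_abs)
  then have "\<bar>x\<^sup>2\<bar> powr (1 + e / 2) = (\<bar>x\<bar> powr 2) powr (1 + e / 2)" by (simp only:)
  also have "\<dots> = \<bar>x\<bar> powr (2 * (1 + e / 2))" by (simp only: powr_powr)
  also have "2 * (1 + e / 2) = 2 + e" by simp
  finally show ?thesis .
qed simp

lemma powr_le_one_plus:
  fixes x p q :: real assumes "0 < p" "p \<le> q"
  shows "\<bar>x\<bar> powr p \<le> 1 + \<bar>x\<bar> powr q"
proof (cases "\<bar>x\<bar> \<le> 1")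
  case True
  hence "\<bar>x\<bar> powr p \<le> 1" using assms powr_mono2[of p "\<bar>x\<bar>" 1] by simp
  then show ?thesis by (smt (verit) powr_ge_zero)
next
  case False
  hence "\<bar>x\<bar> powr p \<le> \<bar>x\<bar> powr q" using assms by (intro powr_mono) auto
  then show ?thesis by simp
qed

lemma weak_cont_compact:
  assumes "compactin (weak_topology M r) D" "g \<in> Lp M r"
  shows "compact ((\<lambda>f. \<integral>x. f x * g x \<partial>M) ` D)"
proof -
  let ?F = "\<lambda>f. \<integral>x. f x * g x \<partial>M"
  let ?S = "{{f. (\<integral>x. f x * g x \<partial>M) \<in> U} | g U. g \<in> Lp M r \<and> open U}"
  have top: "topspace (weak_topology M r) = UNIV"
  proof -
    have "UNIV \<in> ?S" using assms(2) by (intro CollectI exI[of _ g] exI[of _ UNIV]) auto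
    then show ?thesis unfolding weak_topology_def by auto
  qed
  have "continuous_map (weak_topology M r) euclideanreal ?F"
    unfolding continuous_map
  proof (intro conjI allI impI)
    fix U :: "real set" assume "openin euclideanreal U"
    hence "open U" by simp
    hence "{f. ?F f \<in> U} \<in> ?S" using assms(2) by blast
    hence "openin (weak_topology M r) {f. ?F f \<in> U}"
      unfolding weak_topology_def by (rule topology_generated_by_Basis)
    then show "openin (weak_topology M r) {x \<in> topspace (weak_topology M r). ?F x \<in> U}"
      using top by simp
  qed simp
  from image_compactin[OF assms(1) this] show ?thesis by simp
qed

theorem theorem5:
  fixes M C :: "'a measure" and \<epsilon> :: real and \<rho> :: "('a \<Rightarrow> real) \<Rightarrow> real"
    and \<xi> \<eta>1 \<eta>2 :: "'a \<Rightarrow> real"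
  assumes "prob_space M" and "complete_measure M"
    and "0 < \<epsilon>" and "\<epsilon> < 1"
    and "subalgebra M C"
    and "sublinear_operator M (2 + \<epsilon>) \<rho>"
    and rep: "\<forall>X\<in>Lp M (2 + \<epsilon>). \<exists>f\<in>rep_densities M (2 + \<epsilon>) \<rho>. \<rho> X = (\<integral>x. f x * X x \<partial>M)"
    and equiv: "\<forall>f\<in>rep_densities M (2 + \<epsilon>) \<rho>. AE x in M. 0 < f x"
    and bounded: "rep_densities M (2 + \<epsilon>) \<rho> \<subseteq> Lp M (1 + 2 / \<epsilon>)"
      "\<exists>B. \<forall>f\<in>rep_densities M (2 + \<epsilon>) \<rho>. (\<integral>x. \<bar>f x\<bar> powr (1 + 2 / \<epsilon>) \<partial>M) \<le> B"
    and compact: "compactin (weak_topology M (1 + \<epsilon> / 2)) (rep_densities M (2 + \<epsilon>) \<rho>)"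
    and "\<xi> \<in> Lp M (4 + 2 * \<epsilon>)"
    and "stable M C (2 + \<epsilon>) \<rho>"
    and "\<eta>1 \<in> LpC M C (2 + \<epsilon>)"
    and "rho_sq M (2 + \<epsilon>) \<rho> \<xi> \<eta>1 = (INF \<eta>\<in>LpC M C (2 + \<epsilon>). rho_sq M (2 + \<epsilon>) \<rho> \<xi> \<eta>)"
    and "\<eta>2 \<in> LpC M C (2 + \<epsilon>)"
    and "rho_sq M (2 + \<epsilon>) \<rho> \<xi> \<eta>2 = (INF \<eta>\<in>LpC M C (2 + \<epsilon>). rho_sq M (2 + \<epsilon>) \<rho> \<xi> \<eta>)"
  shows "AE x in M. \<eta>1 x = \<eta>2 x"
  
proof -
  note assms = assms
  interpret P: prob_space M by fact
  define p where "p = 2 + \<epsilon>"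
  define q where "q = 1 + \<epsilon> / 2"
  define r where "r = 1 + 2 / \<epsilon>"
  define D where "D = rep_densities M p \<rho>"
  have epos: "\<epsilon> * \<epsilon> + (4 + \<epsilon> * 4) \<noteq> 0" using assms(3)
    by (smt (verit) mult_pos_pos)
  have q1: "q > 1" and r1: "r > 1" and qr: "1/r + 1/q = 1" and p0: "p > 0"
    using assms(3) epos by (auto simp: q_def r_def p_def field_simps)
  have Dmeas: "f \<in> borel_measurable M" "AE x in M. 0 \<le> f x" if "f \<in> D" for f
    using that unfolding D_def rep_densities_def by auto
  have Dr: "integrable M (\<lambda>x. \<bar>f x\<bar> powr r)" if "f \<in> D" for f
    using that bounded(1) unfolding D_def r_def p_def Lp_def by auto
  have "(\<lambda>_. 0::real) \<in> Lp M p" unfolding Lp_def by simp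
  with rep have Dne: "D \<noteq> {}" unfolding D_def p_def by blast
  have cpt: "compactin (weak_topology M q) D" using compact unfolding D_def p_def q_def .
  have xi: "\<xi> \<in> borel_measurable M" "integrable M (\<lambda>x. \<bar>\<xi> x\<bar> powr (4 + 2 * \<epsilon>))"
    using assms(12) unfolding Lp_def by auto
  have xip: "integrable M (\<lambda>x. \<bar>\<xi> x\<bar> powr p)"
  proof (rule Bochner_Integration.integrable_bound[of _ "\<lambda>x. 1 + \<bar>\<xi> x\<bar> powr (4 + 2 * \<epsilon>)"])
    show "integrable M (\<lambda>x. 1 + \<bar>\<xi> x\<bar> powr (4 + 2 * \<epsilon>))" using xi by auto
    show "(\<lambda>x. \<bar>\<xi> x\<bar> powr p) \<in> borel_measurable M" using xi by measurable
    show "AE x in M. norm (\<bar>\<xi> x\<bar> powr p) \<le> norm (1 + \<bar>\<xi> x\<bar> powr (4 + 2 * \<epsilon>))"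
      using powr_le_one_plus[of p "4 + 2 * \<epsilon>"] p0 assms(3) unfolding p_def
      by (auto intro!: always_eventually)
  qed
  have LpC_meas: "\<eta> \<in> borel_measurable M" "integrable M (\<lambda>x. \<bar>\<eta> x\<bar> powr p)"
    if "\<eta> \<in> LpC M C p" for \<eta>
    using that measurable_from_subalg[OF assms(5)] unfolding LpC_def by auto
  have gLp: "(\<lambda>x. (\<xi> x - \<eta> x)\<^sup>2) \<in> Lp M q" if "\<eta> \<in> LpC M C p" for \<eta>
  proof -
    have "integrable M (\<lambda>x. \<bar>\<xi> x - \<eta> x\<bar> powr p)"
      by (rule integrable_comb[OF xip LpC_meas(2)[OF that], of _ 2])
         (use xi LpC_meas[OF that] p0 in auto)
    moreover have "(\<lambda>x. \<bar>(\<xi> x - \<eta> x)\<^sup>2\<bar> powr q) = (\<lambda>x. \<bar>\<xi> x - \<eta> x\<bar> powr p)"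
      by (simp only: q_def p_def powr_sq_eq)
    ultimately show ?thesis unfolding Lp_def using xi LpC_meas[OF that]
      by simp
  qed
  define S where "S \<eta> = (\<lambda>f. \<integral>x. f x * (\<xi> x - \<eta> x)\<^sup>2 \<partial>M) ` D" for \<eta>
  have rs: "rho_sq M (2 + \<epsilon>) \<rho> \<xi> \<eta> = Sup (S \<eta>)" for \<eta>
    unfolding rho_sq_def S_def D_def p_def ..
  have Scpt: "compact (S \<eta>)" if "\<eta> \<in> LpC M C p" for \<eta>
    unfolding S_def using weak_cont_compact[OF cpt gLp[OF that]] .
  have Sne: "S \<eta> \<noteq> {}" for \<eta> using Dne unfolding S_def by auto
  have Sbdd: "bdd_above (S \<eta>)" if "\<eta> \<in> LpC M C p" for \<eta>
    using Scpt[OF that] by (intro bounded_imp_bdd_above compact_imp_bounded)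
  have Supper: "(\<integral>x. f x * (\<xi> x - \<eta> x)\<^sup>2 \<partial>M) \<le> rho_sq M (2 + \<epsilon>) \<rho> \<xi> \<eta>"
    if "\<eta> \<in> LpC M C p" "f \<in> D" for \<eta> f
    unfolding rs using Sbdd[OF that(1)] that(2) unfolding S_def by (intro cSup_upper) auto
  have Snonneg: "0 \<le> rho_sq M (2 + \<epsilon>) \<rho> \<xi> \<eta>" if "\<eta> \<in> LpC M C p" for \<eta>
  proof -
    obtain f where f: "f \<in> D" using Dne by auto
    have "0 \<le> (\<integral>x. f x * (\<xi> x - \<eta> x)\<^sup>2 \<partial>M)"
      using Dmeas(2)[OF f] by (intro integral_nonneg_AE) (auto elim!: eventually_mono)
    also note Supper[OF that f]
    finally show ?thesis .
  qed
  have Smax: "\<exists>f\<in>D. rho_sq M (2 + \<epsilon>) \<rho> \<xi> \<eta> = (\<integral>x. f x * (\<xi> x - \<eta> x)\<^sup>2 \<partial>M)"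
    if eL: "\<eta> \<in> LpC M C p" for \<eta>
  proof -
    obtain s where s: "s \<in> S \<eta>" "\<forall>t\<in>S \<eta>. t \<le> s"
      using compact_attains_sup[OF Scpt[OF eL] Sne] by blast
    then have "Sup (S \<eta>) = s" by (intro cSup_eq_maximum) auto
    with s(1) show ?thesis unfolding rs S_def by auto
  qed
  have integ: "integrable M (\<lambda>x. f x * (\<xi> x - \<eta> x)\<^sup>2)"
    if "\<eta> \<in> LpC M C p" "f \<in> D" for \<eta> f
  proof (rule Bochner_Integration.integrable_bound[of _
      "\<lambda>x. \<bar>f x\<bar> powr r / r + \<bar>(\<xi> x - \<eta> x)\<^sup>2\<bar> powr q / q"])
    show "integrable M (\<lambda>x. \<bar>f x\<bar> powr r / r + \<bar>(\<xi> x - \<eta> x)\<^sup>2\<bar> powr q / q)"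
      using Dr[OF that(2)] gLp[OF that(1)] unfolding Lp_def by auto
    show "(\<lambda>x. f x * (\<xi> x - \<eta> x)\<^sup>2) \<in> borel_measurable M"
      using Dmeas(1)[OF that(2)] xi LpC_meas[OF that(1)] by measurable
    show "AE x in M. norm (f x * (\<xi> x - \<eta> x)\<^sup>2) \<le>
        norm (\<bar>f x\<bar> powr r / r + \<bar>(\<xi> x - \<eta> x)\<^sup>2\<bar> powr q / q)"
    proof (intro always_eventually allI)
      fix x
      have "\<bar>f x\<bar> * \<bar>(\<xi> x - \<eta> x)\<^sup>2\<bar> \<le> \<bar>f x\<bar> powr r / r + \<bar>(\<xi> x - \<eta> x)\<^sup>2\<bar> powr q / q"
        using Youngs_inequality[OF r1 q1 qr] by auto
      moreover have "0 \<le> \<bar>f x\<bar> powr r / r + \<bar>(\<xi> x - \<eta> x)\<^sup>2\<bar> powr q / q"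
        using r1 q1 by auto
      ultimately show "norm (f x * (\<xi> x - \<eta> x)\<^sup>2) \<le>
        norm (\<bar>f x\<bar> powr r / r + \<bar>(\<xi> x - \<eta> x)\<^sup>2\<bar> powr q / q)"
        by (simp add: abs_mult)
    qed
  qed
  define m where "m = (INF \<eta>\<in>LpC M C (2 + \<epsilon>). rho_sq M (2 + \<epsilon>) \<rho> \<xi> \<eta>)"
  have e1: "\<eta>1 \<in> LpC M C p" and e2: "\<eta>2 \<in> LpC M C p"
    using assms(14,16) unfolding p_def by auto
  define \<eta> where "\<eta> x = (\<eta>1 x + \<eta>2 x) / 2" for x
  have e: "\<eta> \<in> LpC M C p"
  proof -
    have "\<eta> \<in> borel_measurable C" using e1 e2 unfolding \<eta>_def LpC_def by auto
    moreover have "integrable M (\<lambda>x. \<bar>\<eta> x\<bar> powr p)"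
      by (rule integrable_comb[OF LpC_meas(2)[OF e1] LpC_meas(2)[OF e2], of _ 1])
         (use LpC_meas[OF e1] LpC_meas[OF e2] p0 in \<open>auto simp: \<eta>_def\<close>)
    ultimately show ?thesis unfolding LpC_def by auto
  qed
  have "m \<le> rho_sq M (2 + \<epsilon>) \<rho> \<xi> \<eta>"
    unfolding m_def using e Snonneg unfolding p_def
    by (intro cINF_lower) (auto intro!: bdd_belowI2[of _ 0])
  obtain f where f: "f \<in> D" and fmax: "rho_sq M (2 + \<epsilon>) \<rho> \<xi> \<eta> = (\<integral>x. f x * (\<xi> x - \<eta> x)\<^sup>2 \<partial>M)"
    using Smax[OF e] by blast
  have A1: "(\<integral>x. f x * (\<xi> x - \<eta>1 x)\<^sup>2 \<partial>M) \<le> m"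
    using Supper[OF e1 f] assms(15) unfolding m_def by simp
  have A2: "(\<integral>x. f x * (\<xi> x - \<eta>2 x)\<^sup>2 \<partial>M) \<le> m"
    using Supper[OF e2 f] assms(17) unfolding m_def by simp
  define d where "d x = f x * (\<eta>1 x - \<eta>2 x)\<^sup>2" for x
  have deq: "d x = 2 * (f x * (\<xi> x - \<eta>1 x)\<^sup>2) + 2 * (f x * (\<xi> x - \<eta>2 x)\<^sup>2)
      - 4 * (f x * (\<xi> x - \<eta> x)\<^sup>2)" for x
    unfolding d_def \<eta>_def by (simp add: power2_eq_square algebra_simps)
  have dint: "integrable M d"
    unfolding deq using integ[OF e1 f] integ[OF e2 f] integ[OF e f] by auto
  have "integral\<^sup>L M d = 2 * (\<integral>x. f x * (\<xi> x - \<eta>1 x)\<^sup>2 \<partial>M) + 2 * (\<integral>x. f x * (\<xi> x - \<eta>2 x)\<^sup>2 \<partial>M)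
      - 4 * (\<integral>x. f x * (\<xi> x - \<eta> x)\<^sup>2 \<partial>M)"
    unfolding deq using integ[OF e1 f] integ[OF e2 f] integ[OF e f] by simp
  also have "\<dots> \<le> 0" using A1 A2 fmax \<open>m \<le> _\<close> by linarith
  finally have dle: "integral\<^sup>L M d \<le> 0" .
  have dnn: "AE x in M. 0 \<le> d x"
    using Dmeas(2)[OF f] by (auto simp: d_def elim!: eventually_mono)
  have "0 \<le> integral\<^sup>L M d" using dnn by (rule integral_nonneg_AE)
  with dle have "integral\<^sup>L M d = 0" by simp
  with integral_nonneg_eq_0_iff_AE[OF dint dnn] have "AE x in M. d x = 0" by simp
  moreover have "AE x in M. 0 < f x" using equiv f unfolding D_def p_def by blast
  ultimately show ?thesis by eventually_elim (auto simp: d_def)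
qed

end
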